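(* Let $a_1,\dots,a_l\in\mathbb{R}^n$, $b_1,\dots,b_l\in\mathbb{R}$ with $1\le m\le l$, let $D=\{x\in\mathbb{R}^n : \langle a_j,x\rangle\le b_j,\ j=m+1,\dots,l\}$ and $f(x)=\max_{i=1,\dots,m}[\langle a_i,x\rangle-b_i]+\delta_D(x)$, where none of the affine functions and none of the inequalities can be omitted in this representation. Let $x\in\operatorname{dom} f$ and $u\in\partial f(x)$. Then $$\operatorname{ind} f(x|u)=\{w\in\mathbb{R}^n : \exists\bar t>0\ \forall t\in(0,\bar t):\ u\in\partial f(x+tw)\}.$$
   Context: $\delta_D$ is the indicator function of $D$. For $f(x)\in\mathbb{R}$, $u\in\mathbb{R}^n$, $t>0$, $\xi\in\mathbb{R}^n$, the second-order difference quotient is $\Delta_t^2f(x|u)(\xi)=\frac{2}{t}\left[\frac{f(x+t\xi)-f(x)}{t}-\langle u,\xi\rangle\right]$, the second subderivative is $d^2f(x|u)(\xi)=\liminf_{t\searrow 0,\ \xi'\to\xi}\Delta_t^2f(x|u)(\xi')$, and the indicatrix of $f$ at $x$ relative to $u$ is $\operatorname{ind} f(x|u)=\{\xi\in\mathbb{R}^n : d^2f(x|u)(\xi)\le 1\}$. *)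

theory Defs
  imports "HOL-Analysis.Analysis"
begin

definition indic_fn :: "'a set \<Rightarrow> 'a \<Rightarrow> ereal" where
  "indic_fn D x = (if x \<in> D then 0 else \<infinity>)"

definition polyset :: "(nat \<Rightarrow> 'a::real_inner) \<Rightarrow> (nat \<Rightarrow> real) \<Rightarrow> nat set \<Rightarrow> 'a set" where
  "polyset a b J = {x. \<forall>j\<in>J. a j \<bullet> x \<le> b j}"

definition polyfun :: "(nat \<Rightarrow> 'a::real_inner) \<Rightarrow> (nat \<Rightarrow> real) \<Rightarrow> nat set \<Rightarrow> nat set \<Rightarrow> 'a \<Rightarrow> ereal" where
  "polyfun a b I J x = (SUP i\<in>I. ereal (a i \<bullet> x - b i)) + indic_fn (polyset a b J) x"

definition edom :: "('a \<Rightarrow> ereal) \<Rightarrow> 'a set" where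
  "edom f = {x. f x < \<infinity>}"

definition subdiff :: "('a::real_inner \<Rightarrow> ereal) \<Rightarrow> 'a \<Rightarrow> 'a set" where
  "subdiff f x = {u. \<forall>y. f x + ereal (u \<bullet> (y - x)) \<le> f y}"

definition sdq :: "('a::real_inner \<Rightarrow> ereal) \<Rightarrow> 'a \<Rightarrow> 'a \<Rightarrow> real \<Rightarrow> 'a \<Rightarrow> ereal" where
  "sdq f x u t \<xi> = ereal (2 / t) * ((f (x + t *\<^sub>R \<xi>) - f x) / ereal t - ereal (u \<bullet> \<xi>))"

definition second_subderiv :: "('a::real_inner \<Rightarrow> ereal) \<Rightarrow> 'a \<Rightarrow> 'a \<Rightarrow> 'a \<Rightarrow> ereal" where
  "second_subderiv f x u \<xi> = Liminf (at_right 0 \<times>\<^sub>F nhds \<xi>) (\<lambda>(t, \<xi>'). sdq f x u t \<xi>')"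

definition indicatrix :: "('a::real_inner \<Rightarrow> ereal) \<Rightarrow> 'a \<Rightarrow> 'a \<Rightarrow> 'a set" where
  "indicatrix f x u = {\<xi>. second_subderiv f x u \<xi> \<le> 1}"

end

theory Submission
  imports Defs
begin

definition gmax :: "(nat \<Rightarrow> 'a::real_inner) \<Rightarrow> (nat \<Rightarrow> real) \<Rightarrow> nat set \<Rightarrow> 'a \<Rightarrow> real" where
  "gmax a b I y = Max ((\<lambda>i. a i \<bullet> y - b i) ` I)"

lemma sup_ereal_max:
  assumes "finite I" "I \<noteq> {}"
  shows "(SUP i\<in>I. ereal (h i)) = ereal (Max (h ` I))"
proof -
  have "(SUP i\<in>I. ereal (h i)) = Sup (ereal ` (h ` I))" by (simp add: image_comp)
  also have "\<dots> = Max (ereal ` (h ` I))" using assms by (simp add: cSup_eq_Max)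
  also have "\<dots> = ereal (Max (h ` I))" using assms
    by (simp add: mono_Max_commute[symmetric] mono_def)
  finally show ?thesis .
qed

lemma polyfun_eq:
  assumes "finite I" "I \<noteq> {}"
  shows "polyfun a b I J y = (if y \<in> polyset a b J then ereal (gmax a b I y) else \<infinity>)"
  using sup_ereal_max[OF assms, of "\<lambda>i. a i \<bullet> y - b i"]
  by (simp add: polyfun_def indic_fn_def gmax_def)

lemma ev_small:
  assumes "0 < d"
  shows "eventually (\<lambda>t::real. t * c < d) (at_right 0)"
proof -
  have "((\<lambda>t::real. t * c) \<longlongrightarrow> 0 * c) (at_right 0)"
    by (intro tendsto_intros)
  then show ?thesis using assms by (auto dest: order_tendstoD(2))
qed

lemma sdq_inf:
  assumes "0 < t" "f (x + t *\<^sub>R \<xi>) = \<infinity>" "f x = ereal r"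
  shows "sdq f x u t \<xi> = \<infinity>"
  using assms by (simp add: sdq_def)

lemma sdq_fin:
  assumes "0 < t" "f (x + t *\<^sub>R \<xi>) = ereal s" "f x = ereal r"
  shows "sdq f x u t \<xi> = ereal (2 / t * ((s - r) / t - u \<bullet> \<xi>))"
  using assms by (simp add: sdq_def)

theorem corollary4p8:
  fixes a :: "nat \<Rightarrow> real ^ 'n" and b :: "nat \<Rightarrow> real" and m l :: nat
    and f :: "real ^ 'n \<Rightarrow> ereal" and x u :: "real ^ 'n"
  assumes "1 \<le> m" and "m \<le> l"
    and f_def: "f = polyfun a b {1..m} {m+1..l}"
    and irred_aff: "\<forall>i\<in>{1..m}. polyfun a b ({1..m} - {i}) {m+1..l} \<noteq> f"
    and irred_ineq: "\<forall>j\<in>{m+1..l}. polyfun a b {1..m} ({m+1..l} - {j}) \<noteq> f"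
    and "x \<in> edom f" and "u \<in> subdiff f x"
  shows "indicatrix f x u = {w. \<exists>tb>0. \<forall>t\<in>{0<..<tb}. u \<in> subdiff f (x + t *\<^sub>R w)}"
proof -
  define I where "I = {1..m}"
  define J where "J = {m+1..l}"
  define D where "D = polyset a b J"
  define g where "g = gmax a b I"
  have finI: "finite I" and neI: "I \<noteq> {}" using assms(1) by (auto simp: I_def)
  have finJ: "finite J" by (simp add: J_def)
  have fe: "\<And>y. f y = (if y \<in> D then ereal (g y) else \<infinity>)"
  proof -
    fix y
    have "f y = polyfun a b I J y" by (simp add: f_def I_def J_def)
    then show "f y = (if y \<in> D then ereal (g y) else \<infinity>)"
      using polyfun_eq[OF finI neI, of a b J y] by (simp add: D_def g_def)
  qed
  have D_iff: "\<And>y. y \<in> D \<longleftrightarrow> (\<forall>j\<in>J. a j \<bullet> y \<le> b j)" by (simp add: D_def polyset_def)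
  have g_ge: "\<And>y i. i \<in> I \<Longrightarrow> a i \<bullet> y - b i \<le> g y"
    using finI by (auto simp: g_def gmax_def)
  have g_le: "\<And>y c. g y \<le> c \<longleftrightarrow> (\<forall>i\<in>I. a i \<bullet> y - b i \<le> c)"
    using finI neI by (simp add: g_def gmax_def)
  have xD: "x \<in> D" using assms(6) by (auto simp: edom_def fe split: if_splits)
  have sub: "\<And>y. y \<in> D \<Longrightarrow> g x + u \<bullet> (y - x) \<le> g y"
  proof -
    fix y assume "y \<in> D"
    then have "f x + ereal (u \<bullet> (y - x)) \<le> f y" using assms(7) by (simp add: subdiff_def)
    then show "g x + u \<bullet> (y - x) \<le> g y" using xD \<open>y \<in> D\<close> by (simp add: fe)
  qed
  define crit where "crit w \<longleftrightarrow> (\<forall>j\<in>J. a j \<bullet> x = b j \<longrightarrow> a j \<bullet> w \<le> 0) \<and>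
      (\<forall>i\<in>I. a i \<bullet> x - b i = g x \<longrightarrow> a i \<bullet> w \<le> u \<bullet> w)" for w
  define R where "R w \<longleftrightarrow> (\<exists>tb>0. \<forall>t\<in>{0<..<tb}. u \<in> subdiff f (x + t *\<^sub>R w))" for w
  have L1: "R w" if cw: "crit w" for w
  proof -
    have evD: "eventually (\<lambda>t. \<forall>j\<in>J. a j \<bullet> (x + t *\<^sub>R w) \<le> b j) (at_right 0)"
    proof (rule eventually_ball_finite[OF finJ], intro ballI)
      fix j assume j: "j \<in> J"
      have ajx: "a j \<bullet> x \<le> b j" using xD j D_iff by auto
      show "eventually (\<lambda>t. a j \<bullet> (x + t *\<^sub>R w) \<le> b j) (at_right 0)"
      proof (cases "a j \<bullet> x = b j")
        case True
        then have aw: "a j \<bullet> w \<le> 0" using cw j by (auto simp: crit_def)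
        have "eventually (\<lambda>t::real. 0 < t) (at_right 0)" by (rule eventually_at_right_less)
        then show ?thesis
          by (rule eventually_mono) (simp add: inner_add_right True mult_nonneg_nonpos aw)
      next
        case False
        then have "0 < b j - a j \<bullet> x" using ajx by auto
        from ev_small[OF this, of "a j \<bullet> w"] show ?thesis
          by eventually_elim (simp add: inner_add_right)
      qed
    qed
    have evG: "eventually (\<lambda>t. \<forall>i\<in>I. a i \<bullet> (x + t *\<^sub>R w) - b i \<le> g x + t * (u \<bullet> w)) (at_right 0)"
    proof (rule eventually_ball_finite[OF finI], intro ballI)
      fix i assume i: "i \<in> I"
      have aix: "a i \<bullet> x - b i \<le> g x" using g_ge i by auto
      show "eventually (\<lambda>t. a i \<bullet> (x + t *\<^sub>R w) - b i \<le> g x + t * (u \<bullet> w)) (at_right 0)"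
      proof (cases "a i \<bullet> x - b i = g x")
        case True
        then have aw: "a i \<bullet> w \<le> u \<bullet> w" using cw i by (auto simp: crit_def)
        have "eventually (\<lambda>t::real. 0 < t) (at_right 0)" by (rule eventually_at_right_less)
        then show ?thesis
          by (rule eventually_mono) (use True aw in \<open>simp add: inner_add_right, smt (verit) mult_left_mono\<close>)
      next
        case False
        then have "0 < g x - (a i \<bullet> x - b i)" using aix by auto
        from ev_small[OF this, of "a i \<bullet> w - u \<bullet> w"] show ?thesis
          by eventually_elim (simp add: inner_add_right algebra_simps)
      qed
    qed
    from eventually_conj[OF evD evG] obtain tb where tb: "tb > 0"
      and H: "\<And>t. 0 < t \<Longrightarrow> t < tb \<Longrightarrow> (\<forall>j\<in>J. a j \<bullet> (x + t *\<^sub>R w) \<le> b j) \<and>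
          (\<forall>i\<in>I. a i \<bullet> (x + t *\<^sub>R w) - b i \<le> g x + t * (u \<bullet> w))"
      unfolding eventually_at_right_field by auto
    show ?thesis unfolding R_def
    proof (intro exI[of _ tb] conjI tb ballI)
      fix t assume t: "t \<in> {0<..<tb}"
      have inD: "x + t *\<^sub>R w \<in> D" using H[of t] t D_iff by auto
      have gle: "g (x + t *\<^sub>R w) \<le> g x + t * (u \<bullet> w)" using H[of t] t g_le by auto
      show "u \<in> subdiff f (x + t *\<^sub>R w)" unfolding subdiff_def
      proof (intro CollectI allI)
        fix y
        show "f (x + t *\<^sub>R w) + ereal (u \<bullet> (y - (x + t *\<^sub>R w))) \<le> f y"
        proof (cases "y \<in> D")
          case True
          have "g (x + t *\<^sub>R w) + u \<bullet> (y - (x + t *\<^sub>R w)) \<le> g y"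
            using sub[OF True] gle by (simp add: inner_diff_right inner_add_right)
          then show ?thesis using True inD by (simp add: fe)
        next
          case False
          then show ?thesis by (simp add: fe)
        qed
      qed
    qed
  qed
  define F where "F w = at_right (0::real) \<times>\<^sub>F nhds w" for w :: "real ^ 'n"
  have fxe: "f x = ereal (g x)" using xD by (simp add: fe)
  have Fnb: "F w \<noteq> bot" for w by (simp add: F_def prod_filter_eq_bot)
  have tl: "((\<lambda>\<xi>. c \<bullet> \<xi>) \<longlongrightarrow> c \<bullet> w) (nhds w)" for c w :: "real ^ 'n"
    by (intro tendsto_intros filterlim_ident)
  have L2: "eventually (\<lambda>(t, \<xi>). 2 \<le> sdq f x u t \<xi>) (F w)" if ncw: "\<not> crit w" for w
  proof (cases "\<exists>j\<in>J. a j \<bullet> x = b j \<and> a j \<bullet> w > 0")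
    case True
    then obtain j where j: "j \<in> J" "a j \<bullet> x = b j" "a j \<bullet> w > 0" by auto
    have e1: "eventually (\<lambda>\<xi>. a j \<bullet> \<xi> > 0) (nhds w)"
      using order_tendstoD(1)[OF tl[of "a j" w] j(3)] .
    show ?thesis unfolding F_def eventually_prod_filter
    proof (intro exI conjI allI impI)
      show "eventually (\<lambda>t::real. 0 < t) (at_right 0)" by (rule eventually_at_right_less)
      show "eventually (\<lambda>\<xi>. a j \<bullet> \<xi> > 0) (nhds w)" by (rule e1)
      fix t :: real and \<xi> assume t: "0 < t" and xi: "a j \<bullet> \<xi> > 0"
      have "a j \<bullet> (x + t *\<^sub>R \<xi>) > b j" using t xi j(2) by (simp add: inner_add_right)
      then have "x + t *\<^sub>R \<xi> \<notin> D" using j(1) D_iff by force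
      then have "sdq f x u t \<xi> = \<infinity>" using sdq_inf[of t f x \<xi> "g x" u] t fxe by (simp add: fe)
      then show "case (t, \<xi>) of (t, \<xi>) \<Rightarrow> 2 \<le> sdq f x u t \<xi>" by simp
    qed
  next
    case False
    then obtain i where i: "i \<in> I" "a i \<bullet> x - b i = g x" "a i \<bullet> w > u \<bullet> w"
      using ncw by (force simp: crit_def)
    define c where "c = a i \<bullet> w - u \<bullet> w"
    have c: "c > 0" using i by (simp add: c_def)
    have e1: "eventually (\<lambda>\<xi>. (a i - u) \<bullet> \<xi> > c / 2) (nhds w)"
    proof -
      have "c / 2 < (a i - u) \<bullet> w" using c by (simp add: c_def inner_diff_left)
      from order_tendstoD(1)[OF tl[of "a i - u" w] this] show ?thesis .
    qed
    have e0: "eventually (\<lambda>t::real. 0 < t \<and> t < c / 2) (at_right 0)"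
      unfolding eventually_at_right_field using c by (intro exI[of _ "c/2"]) auto
    show ?thesis unfolding F_def eventually_prod_filter
    proof (intro exI conjI allI impI)
      show "eventually (\<lambda>t::real. 0 < t \<and> t < c / 2) (at_right 0)" by (rule e0)
      show "eventually (\<lambda>\<xi>. (a i - u) \<bullet> \<xi> > c / 2) (nhds w)" by (rule e1)
      fix t :: real and \<xi> assume t: "0 < t \<and> t < c / 2" and xi: "(a i - u) \<bullet> \<xi> > c / 2"
      have "2 \<le> sdq f x u t \<xi>"
      proof (cases "x + t *\<^sub>R \<xi> \<in> D")
        case False
        then have "sdq f x u t \<xi> = \<infinity>" using sdq_inf[of t f x \<xi> "g x" u] t fxe by (simp add: fe)
        then show ?thesis by simp
      next
        case True
        have geq: "g (x + t *\<^sub>R \<xi>) \<ge> g x + t * (a i \<bullet> \<xi>)"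
          using g_ge[OF i(1), of "x + t *\<^sub>R \<xi>"] i(2) by (simp add: inner_add_right)
        have "sdq f x u t \<xi> = ereal (2 / t * ((g (x + t *\<^sub>R \<xi>) - g x) / t - u \<bullet> \<xi>))"
          using sdq_fin[of t f x \<xi> "g (x + t *\<^sub>R \<xi>)" "g x" u] t fxe True by (simp add: fe)
        moreover have "(g (x + t *\<^sub>R \<xi>) - g x) / t \<ge> a i \<bullet> \<xi>"
          using geq t by (simp add: field_simps)
        moreover have "a i \<bullet> \<xi> - u \<bullet> \<xi> > t" using xi t by (simp add: inner_diff_left)
        ultimately have q: "(g (x + t *\<^sub>R \<xi>) - g x) / t - u \<bullet> \<xi> \<ge> t"
          and sq: "sdq f x u t \<xi> = ereal (2 / t * ((g (x + t *\<^sub>R \<xi>) - g x) / t - u \<bullet> \<xi>))"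
          by linarith+
        have "2 / t * ((g (x + t *\<^sub>R \<xi>) - g x) / t - u \<bullet> \<xi>) \<ge> 2 / t * t"
          by (rule mult_left_mono[OF q]) (use t in simp)
        then have "2 / t * ((g (x + t *\<^sub>R \<xi>) - g x) / t - u \<bullet> \<xi>) \<ge> 2" using t by simp
        then show ?thesis unfolding sq by simp
      qed
      then show "case (t, \<xi>) of (t, \<xi>) \<Rightarrow> 2 \<le> sdq f x u t \<xi>" by simp
    qed
  qed
  have L3: "second_subderiv f x u w \<le> 0" if Rw: "R w" for w
  proof -
    obtain tb where tb: "tb > 0" and H: "\<And>t. t \<in> {0<..<tb} \<Longrightarrow> u \<in> subdiff f (x + t *\<^sub>R w)"
      using Rw by (auto simp: R_def)
    have zero: "sdq f x u t w = 0" if t: "t \<in> {0<..<tb}" for t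
    proof -
      have t0: "0 < t" using t by simp
      have "f (x + t *\<^sub>R w) + ereal (u \<bullet> (x - (x + t *\<^sub>R w))) \<le> f x"
        using H[OF t] unfolding subdiff_def by blast
      then have inD: "x + t *\<^sub>R w \<in> D" and le: "g (x + t *\<^sub>R w) - t * (u \<bullet> w) \<le> g x"
        using fxe by (auto simp: fe split: if_splits)
      have ge: "g x + t * (u \<bullet> w) \<le> g (x + t *\<^sub>R w)" using sub[OF inD] by simp
      have eq: "g (x + t *\<^sub>R w) - g x = t * (u \<bullet> w)" using le ge by linarith
      show ?thesis using sdq_fin[of t f x w "g (x + t *\<^sub>R w)" "g x" u] fxe inD eq t0 by (simp add: fe)
    qed
    show ?thesis unfolding second_subderiv_def Liminf_def
    proof (rule SUP_least)
      fix P :: "real \<times> (real ^ 'n) \<Rightarrow> bool" assume "P \<in> {P. eventually P (at_right 0 \<times>\<^sub>F nhds w)}"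
      then obtain Pf Pg where Pf: "eventually Pf (at_right (0::real))" and Pg: "eventually Pg (nhds w)"
        and PP: "\<And>t \<xi>. Pf t \<Longrightarrow> Pg \<xi> \<Longrightarrow> P (t, \<xi>)"
        by (auto simp: eventually_prod_filter)
      obtain bb where bb: "bb > 0" "\<And>y. y > 0 \<Longrightarrow> y < bb \<Longrightarrow> Pf y"
        using Pf unfolding eventually_at_right_field by auto
      define t where "t = min bb tb / 2"
      have t: "t \<in> {0<..<tb}" "Pf t" using bb tb by (auto simp: t_def)
      have "P (t, w)" using PP[OF t(2) eventually_nhds_x_imp_x[OF Pg]] .
      then have "(INF p\<in>{p. P p}. (case p of (t, \<xi>') \<Rightarrow> sdq f x u t \<xi>')) \<le> sdq f x u t w"
        by (intro INF_lower2[of "(t, w)"]) auto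
      then show "(INF p\<in>{p. P p}. (case p of (t, \<xi>') \<Rightarrow> sdq f x u t \<xi>')) \<le> 0"
        using zero[OF t(1)] by simp
    qed
  qed
  show ?thesis
  proof (intro set_eqI iffI)
    fix w assume "w \<in> indicatrix f x u"
    then have le1: "second_subderiv f x u w \<le> 1" by (simp add: indicatrix_def)
    show "w \<in> {w. \<exists>tb>0. \<forall>t\<in>{0<..<tb}. u \<in> subdiff f (x + t *\<^sub>R w)}"
    proof (rule ccontr)
      assume "w \<notin> {w. \<exists>tb>0. \<forall>t\<in>{0<..<tb}. u \<in> subdiff f (x + t *\<^sub>R w)}"
      then have "\<not> R w" by (simp add: R_def)
      then have "\<not> crit w" using L1 by blast
      from L2[OF this, unfolded F_def]
      have "(2::ereal) \<le> second_subderiv f x u w" unfolding second_subderiv_def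
        by (intro Liminf_bounded) (simp add: case_prod_unfold)
      from order_trans[OF this le1] show False by simp
    qed
  next
    fix w assume "w \<in> {w. \<exists>tb>0. \<forall>t\<in>{0<..<tb}. u \<in> subdiff f (x + t *\<^sub>R w)}"
    then have "R w" by (simp add: R_def)
    then have "second_subderiv f x u w \<le> 0" by (rule L3)
    then have "second_subderiv f x u w \<le> 1" by (rule order_trans) simp
    then show "w \<in> indicatrix f x u" by (simp add: indicatrix_def)
  qed
qed

end
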